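(* Let $G$ be a locally compact abelian group with Haar measure $m$, and let $\widehat{G}$ be its dual group with Haar measure $\widehat{m}$. Let $1\leq p\leq 2\leq q$. Let $S\subset G$ and $\Sigma\subset\widehat{G}$ be two sets of finite measure, and assume that $\Sigma$ satisfies a $(p,q)$-restriction estimate with constant $\rho_{p,q}(\Sigma)$, i.e. $$\left(\int_\Sigma|\widehat{f}(\xi)|^q\,\mathrm{d}\widehat{m}(\xi)\right)^{1/q}\leq \rho_{p,q}(\Sigma)\left(\int_G|f(x)|^p\,\mathrm{d}m(x)\right)^{1/p}\quad\text{for all } f\in\mathcal{S}(G)$$ (with supremum norms replacing the integrals if $q=\infty$). Assume that $$\rho_{p,q}(\Sigma)\,m(S)^{\frac1p-\frac12}\,\widehat{m}(\Sigma)^{\frac12-\frac1q}<1.$$ Then $(S,\Sigma)$ is a strong annihilating pair; more precisely, for every $f\in L^2(G)$, $$\|f\|_{L^2(G)}\leq A_{ann}(S,\Sigma)\bigl(\|f\|_{L^2(G\setminus S)}+\|\widehat{f}\|_{L^2(\widehat{G}\setminus\Sigma)}\bigr),\qquad A_{ann}(S,\Sigma)=\frac{1}{1-\rho_{p,q}(\Sigma)\,m(S)^{\frac1p-\frac12}\,\widehat{m}(\Sigma)^{\frac12-\frac1q}}.$$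
   Context: The Fourier transform of $f\in L^1(G)$ is $\widehat{f}(\chi)=c_G\int_G f(x)\overline{\chi(x)}\,\mathrm{d}m(x)$ for $\chi\in\widehat{G}$ (characters are continuous homomorphisms $G\to\{|z|=1\}$), where the normalization constant $c_G>0$ is chosen so that the Fourier transform extends to a unitary map $L^2(G)\to L^2(\widehat{G})$. $\mathcal{S}(G)\subset L^1(G)$ denotes a fixed class of functions that is dense in every $L^p(G)$, $1\leq p<\infty$, and such that $\widehat{f}$ is continuous for $f\in\mathcal{S}(G)$; the restriction estimate means the Fourier transform extends continuously $L^p(G)\to L^q(\Sigma)$ with the stated bound. A pair $(S,\Sigma)$ is a strong annihilating pair if there is a constant $C$ with $\|f\|_{L^2(G)}\leq C(\|f\|_{L^2(G\setminus S)}+\|\widehat f\|_{L^2(\widehat G\setminus\Sigma)})$ for all $f\in L^2(G)$. *)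

theory Defs
  imports "HOL-Analysis.Analysis" "HOL-Probability.Probability"
begin

definition lca_group :: "'g::{topological_group_add, ab_group_add, t2_space} itself \<Rightarrow> bool" where
  "lca_group _ \<longleftrightarrow> locally_compact_space (euclidean :: 'g topology)"

definition borel_sets_of :: "'a topology \<Rightarrow> 'a set set" where
  "borel_sets_of X = sigma_sets (topspace X) {U. openin X U}"

definition haar_measure :: "'a topology \<Rightarrow> ('a \<Rightarrow> 'a \<Rightarrow> 'a) \<Rightarrow> 'a measure \<Rightarrow> bool" where
  "haar_measure X gop M \<longleftrightarrow>
     space M = topspace X \<and> sets M = borel_sets_of X \<and>
     (\<forall>K. compactin X K \<longrightarrow> emeasure M K < \<infinity>) \<and>
     (\<forall>U. openin X U \<and> U \<noteq> {} \<longrightarrow> emeasure M U > 0) \<and>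
     (\<forall>A\<in>sets M. emeasure M A = (INF U\<in>{U. openin X U \<and> A \<subseteq> U}. emeasure M U)) \<and>
     (\<forall>U. openin X U \<longrightarrow> emeasure M U = (SUP K\<in>{K. compactin X K \<and> K \<subseteq> U}. emeasure M K)) \<and>
     (\<forall>a\<in>topspace X. \<forall>A\<in>sets M. emeasure M (gop a ` A) = emeasure M A)"

definition is_character :: "('g::{topological_group_add, ab_group_add} \<Rightarrow> complex) \<Rightarrow> bool" where
  "is_character ch \<longleftrightarrow> continuous_on UNIV ch \<and> (\<forall>x y. ch (x + y) = ch x * ch y) \<and> (\<forall>x. cmod (ch x) = 1)"

definition dual_group :: "('g::{topological_group_add, ab_group_add} \<Rightarrow> complex) set" where
  "dual_group = {ch. is_character ch}"

text \<open>The dual group carries the compact-open topology (subbasis: characters mapping a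
  compact set K into an open set U).\<close>
definition dual_top :: "('g::{topological_group_add, ab_group_add} \<Rightarrow> complex) topology" where
  "dual_top = topology_generated_by
     {{ch\<in>dual_group. ch ` K \<subseteq> U} | K U. compact K \<and> open U}"

definition dual_mult :: "('g \<Rightarrow> complex) \<Rightarrow> ('g \<Rightarrow> complex) \<Rightarrow> ('g \<Rightarrow> complex)" where
  "dual_mult \<eta> ch = (\<lambda>x. \<eta> x * ch x)"

definition Lp :: "'a measure \<Rightarrow> real \<Rightarrow> ('a \<Rightarrow> complex) \<Rightarrow> bool" where
  "Lp M p f \<longleftrightarrow> f \<in> borel_measurable M \<and> integrable M (\<lambda>x. cmod (f x) powr p)"

definition Lp_norm :: "'a measure \<Rightarrow> real \<Rightarrow> ('a \<Rightarrow> complex) \<Rightarrow> real" where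
  "Lp_norm M p f = (\<integral>x. cmod (f x) powr p \<partial>M) powr (1 / p)"

text \<open>The norm of f in L^q(Sigma), q in [1,\<infinity>] (as an extended real, since it may be infinite);
  for q = \<infinity> it is the essential supremum over Sigma.\<close>
definition Lq_norm_on :: "'a measure \<Rightarrow> ereal \<Rightarrow> 'a set \<Rightarrow> ('a \<Rightarrow> complex) \<Rightarrow> ereal" where
  "Lq_norm_on M q A f =
     (if q = \<infinity> then esssup (restrict_space M A) (\<lambda>x. ereal (cmod (f x)))
      else (let I = (\<integral>\<^sup>+ x. indicator A x * ennreal (cmod (f x) powr real_of_ereal q) \<partial>M) in
            if I = \<infinity> then \<infinity> else ereal (enn2real I powr (1 / real_of_ereal q))))"

text \<open>1/q for q in [1,\<infinity>], with 1/\<infinity> = 0.\<close>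
definition inv_exp :: "ereal \<Rightarrow> real" where
  "inv_exp q = (if q = \<infinity> then 0 else 1 / real_of_ereal q)"

text \<open>Real power with the convention x^0 = 1 (also for x = 0).\<close>
definition rpow :: "real \<Rightarrow> real \<Rightarrow> real" where
  "rpow x a = (if a = 0 then 1 else x powr a)"

definition fourier :: "real \<Rightarrow> 'g measure \<Rightarrow> ('g \<Rightarrow> complex) \<Rightarrow> ('g \<Rightarrow> complex) \<Rightarrow> complex" where
  "fourier c M f ch = complex_of_real c * (\<integral>x. f x * cnj (ch x) \<partial>M)"

text \<open>g is the L^2 Fourier transform of f in L^2(G): the limit in L^2(dual) of the Fourier
  transforms of functions in L^1 \<inter> L^2 converging to f in L^2.\<close>
definition fourier_L2 :: "real \<Rightarrow> 'g measure \<Rightarrow> ('g \<Rightarrow> complex) measure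
    \<Rightarrow> ('g \<Rightarrow> complex) \<Rightarrow> (('g \<Rightarrow> complex) \<Rightarrow> complex) \<Rightarrow> bool" where
  "fourier_L2 c M Mh f g \<longleftrightarrow> Lp M 2 f \<and> Lp Mh 2 g \<and>
     (\<exists>F. (\<forall>n. integrable M (F n) \<and> Lp M 2 (F n) \<and> fourier c M (F n) \<in> borel_measurable Mh) \<and>
          ((\<lambda>n. \<integral>\<^sup>+ x. ennreal ((cmod (F n x - f x))\<^sup>2) \<partial>M) \<longlonglongrightarrow> 0) \<and>
          ((\<lambda>n. \<integral>\<^sup>+ \<xi>. ennreal ((cmod (fourier c M (F n) \<xi> - g \<xi>))\<^sup>2) \<partial>Mh) \<longlonglongrightarrow> 0))"

text \<open>The normalization constant c > 0 makes the Fourier transform extend to a unitary map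
  L^2(G) \<rightarrow> L^2(dual): isometric on L^1 \<inter> L^2 and the extension is onto.\<close>
definition fourier_unitary :: "real \<Rightarrow> 'g measure \<Rightarrow> ('g \<Rightarrow> complex) measure \<Rightarrow> bool" where
  "fourier_unitary c M Mh \<longleftrightarrow> c > 0 \<and>
     (\<forall>f. integrable M f \<and> Lp M 2 f \<longrightarrow>
        fourier c M f \<in> borel_measurable Mh \<and>
        (\<integral>\<^sup>+ \<xi>. ennreal ((cmod (fourier c M f \<xi>))\<^sup>2) \<partial>Mh) = (\<integral>\<^sup>+ x. ennreal ((cmod (f x))\<^sup>2) \<partial>M)) \<and>
     (\<forall>g. Lp Mh 2 g \<longrightarrow> (\<exists>f. fourier_L2 c M Mh f g))"

text \<open>The test class S(G): a subset of L^1(G), contained and dense in every L^p(G),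
  1 \<le> p < \<infinity>, whose Fourier transforms are continuous on the dual group.\<close>
definition test_class :: "real \<Rightarrow> 'g::{topological_group_add, ab_group_add} measure
    \<Rightarrow> ('g \<Rightarrow> complex) set \<Rightarrow> bool" where
  "test_class c M SG \<longleftrightarrow>
     (\<forall>f\<in>SG. integrable M f \<and> continuous_map dual_top euclidean (fourier c M f)) \<and>
     (\<forall>p::real. 1 \<le> p \<longrightarrow> (\<forall>f\<in>SG. Lp M p f) \<and>
        (\<forall>f. Lp M p f \<longrightarrow> (\<forall>e>0. \<exists>\<phi>\<in>SG. Lp_norm M p (\<lambda>x. f x - \<phi> x) < e)))"

definition restriction_estimate :: "real \<Rightarrow> 'g measure \<Rightarrow> ('g \<Rightarrow> complex) measure
    \<Rightarrow> ('g \<Rightarrow> complex) set \<Rightarrow> real \<Rightarrow> ereal \<Rightarrow> ('g \<Rightarrow> complex) set \<Rightarrow> real \<Rightarrow> bool" where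
  "restriction_estimate c M Mh SG p q \<Sigma> \<rho> \<longleftrightarrow>
     (\<forall>f\<in>SG. Lq_norm_on Mh q \<Sigma> (fourier c M f) \<le> ereal (\<rho> * Lp_norm M p f))"

end

theory Submission imports Defs begin

lemma conv_pt:
  fixes x y p t :: real
  assumes p: "p \<ge> 1" and t: "0 < t" "t < 1" and xy: "x \<ge> 0" "y \<ge> 0"
  shows "(x + y) powr p \<le> (1 - t) powr (1 - p) * x powr p + t powr (1 - p) * y powr p"
proof -
  have a: "1 \<le> (1 - t) powr (1 - p)" using p t
    using powr_mono'[of "1 - p" 0 "1 - t"] by simp
  have b: "1 \<le> t powr (1 - p)" using p t
    using powr_mono'[of "1 - p" 0 t] by simp
  show ?thesis
  proof (cases "x = 0 \<or> y = 0")
    case True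
    then show ?thesis
    proof
      assume "x = 0" then show ?thesis using b p xy
        by (simp add: mult_le_cancel_right1) 
    next
      assume "y = 0" then show ?thesis using a p xy
        by (simp add: mult_le_cancel_right1)
    qed
  next
    case False
    then have xp: "x > 0" "y > 0" using xy by auto
    have "((1 - t) * (x / (1 - t)) + t * (y / t)) powr p \<le> (1 - t) * (x / (1 - t)) powr p + t * (y / t) powr p"
      using conjunct2[OF powr_convex[OF p, unfolded convex_on_def], rule_format, of "x / (1 - t)" "y / t" "1 - t" t] t xp
      by simp
    also have "(1 - t) * (x / (1 - t)) powr p = (1 - t) powr (1 - p) * x powr p"
      using t xp by (simp add: powr_divide powr_diff)
    also have "t * (y / t) powr p = t powr (1 - p) * y powr p"
      using t xp by (simp add: powr_divide powr_diff)
    finally show ?thesis using t by simp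
  qed
qed
lemma powr_alg:
  fixes a b p :: real
  assumes "a > 0" "b > 0"
  shows "(a / (a + b)) powr (1 - p) * a powr p + (b / (a + b)) powr (1 - p) * b powr p = (a + b) powr p"
proof -
  have e: "(x / (a + b)) powr (1 - p) * x powr p = x * (a + b) powr (p - 1)" if "x > 0" for x
  proof -
    have "(x / (a + b)) powr (1 - p) * x powr p = (x powr (1 - p) * x powr p) / (a + b) powr (1 - p)"
      using that assms by (simp add: powr_divide)
    also have "x powr (1 - p) * x powr p = x" using that by (simp flip: powr_add)
    also have "x / (a + b) powr (1 - p) = x * (a + b) powr (p - 1)"
      using assms by (simp add: powr_minus_divide[symmetric] powr_diff divide_simps)
    finally show ?thesis .
  qed
  have "(a + b) powr p = (a + b) * (a + b) powr (p - 1)"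
    using assms by (simp add: powr_diff)
  then show ?thesis using e assms by (simp add: algebra_simps)
qed

lemma minkowski:
  fixes u v :: "'a \<Rightarrow> complex" and p :: real
  assumes p: "p \<ge> 1" and [measurable]: "u \<in> borel_measurable M" "v \<in> borel_measurable M"
    and iu: "integrable M (\<lambda>x. cmod (u x) powr p)" and iv: "integrable M (\<lambda>x. cmod (v x) powr p)"
  shows "integrable M (\<lambda>x. cmod (u x + v x) powr p)"
    and "(\<integral>x. cmod (u x + v x) powr p \<partial>M) powr (1/p) \<le>
         (\<integral>x. cmod (u x) powr p \<partial>M) powr (1/p) + (\<integral>x. cmod (v x) powr p \<partial>M) powr (1/p)"
proof -
  have pt: "cmod (u x + v x) powr p \<le> (1 - t) powr (1 - p) * cmod (u x) powr p + t powr (1 - p) * cmod (v x) powr p"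
    if "0 < t" "t < 1" for x t
  proof -
    have "cmod (u x + v x) powr p \<le> (cmod (u x) + cmod (v x)) powr p"
      using p by (intro powr_mono2) (auto intro: norm_triangle_ineq)
    also have "\<dots> \<le> (1 - t) powr (1 - p) * cmod (u x) powr p + t powr (1 - p) * cmod (v x) powr p"
      using conv_pt[OF p that] by simp
    finally show ?thesis .
  qed
  have ib: "integrable M (\<lambda>x. (1 - t) powr (1 - p) * cmod (u x) powr p + t powr (1 - p) * cmod (v x) powr p)" for t
    using iu iv by auto
  show int: "integrable M (\<lambda>x. cmod (u x + v x) powr p)"
    by (rule Bochner_Integration.integrable_bound[OF ib[of "1/2"]]) (use pt[of "1/2"] in \<open>auto intro!: order.trans[OF _ abs_ge_self]\<close>)
  have ineq: "(\<integral>x. cmod (u x + v x) powr p \<partial>M) \<le> (1 - t) powr (1 - p) * (\<integral>x. cmod (u x) powr p \<partial>M) + t powr (1 - p) * (\<integral>x. cmod (v x) powr p \<partial>M)"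
    if "0 < t" "t < 1" for t
  proof -
    have "(\<integral>x. cmod (u x + v x) powr p \<partial>M) \<le> (\<integral>x. (1 - t) powr (1 - p) * cmod (u x) powr p + t powr (1 - p) * cmod (v x) powr p \<partial>M)"
      by (rule integral_mono[OF int ib]) (rule pt[OF that])
    also have "\<dots> = (1 - t) powr (1 - p) * (\<integral>x. cmod (u x) powr p \<partial>M) + t powr (1 - p) * (\<integral>x. cmod (v x) powr p \<partial>M)"
      using iu iv by simp
    finally show ?thesis .
  qed
  define A where "A = (\<integral>x. cmod (u x) powr p \<partial>M)"
  define B where "B = (\<integral>x. cmod (v x) powr p \<partial>M)"
  have A0: "A \<ge> 0" "B \<ge> 0" unfolding A_def B_def by auto
  show "(\<integral>x. cmod (u x + v x) powr p \<partial>M) powr (1/p) \<le>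
         (\<integral>x. cmod (u x) powr p \<partial>M) powr (1/p) + (\<integral>x. cmod (v x) powr p \<partial>M) powr (1/p)"
  proof (cases "A = 0 \<or> B = 0")
    case True
    then show ?thesis
    proof
      assume "A = 0"
      then have "AE x in M. cmod (u x) powr p = 0" unfolding A_def
        using integral_nonneg_eq_0_iff_AE[OF iu] by auto
      then have "AE x in M. cmod (u x + v x) powr p = cmod (v x) powr p" by eventually_elim auto
      then have "(\<integral>x. cmod (u x + v x) powr p \<partial>M) = B" unfolding B_def
        by (intro integral_cong_AE) auto
      then show ?thesis using \<open>A = 0\<close> unfolding A_def B_def by simp
    next
      assume "B = 0"
      then have "AE x in M. cmod (v x) powr p = 0" unfolding B_def
        using integral_nonneg_eq_0_iff_AE[OF iv] by auto
      then have "AE x in M. cmod (u x + v x) powr p = cmod (u x) powr p" by eventually_elim auto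
      then have "(\<integral>x. cmod (u x + v x) powr p \<partial>M) = A" unfolding A_def
        by (intro integral_cong_AE) auto
      then show ?thesis using \<open>B = 0\<close> unfolding A_def B_def by simp
    qed
  next
    case False
    define a where "a = A powr (1/p)"
    define b where "b = B powr (1/p)"
    have ab: "a > 0" "b > 0" using False A0 unfolding a_def b_def by auto
    have Aa: "A = a powr p" "B = b powr p" using False A0 p unfolding a_def b_def by (auto simp: powr_powr)
    have "(\<integral>x. cmod (u x + v x) powr p \<partial>M) \<le> (1 - b / (a + b)) powr (1 - p) * A + (b / (a + b)) powr (1 - p) * B"
      using ineq[of "b / (a + b)"] ab unfolding A_def B_def by (simp add: divide_simps)
    also have "1 - b / (a + b) = a / (a + b)" using ab by (simp add: divide_simps)
    also have "(a / (a + b)) powr (1 - p) * A + (b / (a + b)) powr (1 - p) * B = (a + b) powr p"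
      unfolding Aa by (rule powr_alg[OF ab])
    finally have "(\<integral>x. cmod (u x + v x) powr p \<partial>M) powr (1/p) \<le> ((a + b) powr p) powr (1/p)"
      using p by (intro powr_mono2) auto
    also have "\<dots> = a + b" using ab p by (simp add: powr_powr)
    finally show ?thesis unfolding a_def b_def A_def B_def .
  qed
qed
lemma tangent_pt:
  fixes v a r :: real
  assumes r: "0 < r" "r \<le> 1" and v: "v \<ge> 0" and a: "a > 0"
  shows "v powr r \<le> r * a powr (r - 1) * v + (1 - r) * a powr r"
proof (cases "v = 0")
  case True then show ?thesis using r a by simp
next
  case False
  then have vp: "v > 0" using v by simp
  have "(v / a) powr r * 1 powr (1 - r) \<le> r * (v / a) + (1 - r) * 1"
    using r vp a by (intro Youngs_inequality_0) auto
  then have "(v / a) powr r * a powr r \<le> (r * (v / a) + (1 - r)) * a powr r"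
    by (intro mult_right_mono) auto
  moreover have "(v / a) powr r * a powr r = v powr r" using vp a by (simp add: powr_divide)
  moreover have "(r * (v / a) + (1 - r)) * a powr r = r * a powr (r - 1) * v + (1 - r) * a powr r"
    using a by (simp add: powr_diff algebra_simps)
  ultimately show ?thesis by simp
qed

lemma conc_holder:
  fixes v :: "'a \<Rightarrow> real" and r :: real
  assumes r: "0 < r" "r \<le> 1" and [measurable]: "v \<in> borel_measurable M" "A \<in> sets M"
    and fin: "emeasure M A < \<infinity>" and nn: "\<And>x. v x \<ge> 0"
    and iv: "integrable M (\<lambda>x. indicator A x * v x)"
  shows "integrable M (\<lambda>x. indicator A x * v x powr r)"
    and "(\<integral>x. indicator A x * v x powr r \<partial>M) \<le> rpow (measure M A) (1 - r) * (\<integral>x. indicator A x * v x \<partial>M) powr r"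
proof -
  have iA: "integrable M (indicator A :: 'a \<Rightarrow> real)"
    using fin by (simp add: less_top[symmetric])
  have pt: "indicator A x * v x powr r \<le> r * a powr (r - 1) * (indicator A x * v x) + (1 - r) * a powr r * indicator A x"
    if "a > 0" for a x
    using tangent_pt[OF r nn[of x] that] by (cases "x \<in> A") auto
  have ib: "integrable M (\<lambda>x. r * a powr (r - 1) * (indicator A x * v x) + (1 - r) * a powr r * indicator A x)" for a
    using iv iA by auto
  show int: "integrable M (\<lambda>x. indicator A x * v x powr r)"
    by (rule Bochner_Integration.integrable_bound[OF ib[of 1]]) (use pt[of 1] r nn in \<open>auto simp: indicator_def\<close>)
  have ineq: "(\<integral>x. indicator A x * v x powr r \<partial>M) \<le> r * a powr (r - 1) * (\<integral>x. indicator A x * v x \<partial>M) + (1 - r) * a powr r * measure M A"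
    if "a > 0" for a
  proof -
    have "(\<integral>x. indicator A x * v x powr r \<partial>M) \<le> (\<integral>x. r * a powr (r - 1) * (indicator A x * v x) + (1 - r) * a powr r * indicator A x \<partial>M)"
      by (rule integral_mono[OF int ib]) (rule pt[OF that])
    also have "\<dots> = r * a powr (r - 1) * (\<integral>x. indicator A x * v x \<partial>M) + (1 - r) * a powr r * measure M A"
      using iv iA fin by (simp add: less_top[symmetric])
    finally show ?thesis .
  qed
  define V where "V = (\<integral>x. indicator A x * v x \<partial>M)"
  define \<mu> where "\<mu> = measure M A"
  have V0: "V \<ge> 0" "\<mu> \<ge> 0" unfolding V_def \<mu>_def using nn by (auto intro!: integral_nonneg)
  have L0: "0 \<le> (\<integral>x. indicator A x * v x powr r \<partial>M)" by (auto intro!: integral_nonneg)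
  have R0: "0 \<le> rpow \<mu> (1 - r) * V powr r" using V0 by (auto simp: rpow_def)
  show "(\<integral>x. indicator A x * v x powr r \<partial>M) \<le> rpow (measure M A) (1 - r) * (\<integral>x. indicator A x * v x \<partial>M) powr r"
  proof (cases "r = 1")
    case True then show ?thesis using nn by (simp add: rpow_def)
  next
    case False
    then have r1: "r < 1" using r by simp
    show ?thesis
    proof (cases "V = 0 \<or> \<mu> = 0")
      case True
      have "AE x in M. indicator A x * v x = 0"
      proof (cases "V = 0")
        case True then show ?thesis using integral_nonneg_eq_0_iff_AE[OF iv] nn unfolding V_def by auto
      next
        case False
        then have "\<mu> = 0" using \<open>V = 0 \<or> \<mu> = 0\<close> by simp
        then have "emeasure M A = 0" unfolding \<mu>_def using fin by (simp add: emeasure_eq_ennreal_measure less_top[symmetric])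
        then have "AE x in M. x \<notin> A" by (intro AE_not_in) auto
        then show ?thesis by eventually_elim auto
      qed
      then have "AE x in M. indicator A x * v x powr r = 0" by eventually_elim (auto simp: indicator_def split: if_splits)
      then have "(\<integral>x. indicator A x * v x powr r \<partial>M) = 0" by (simp add: integral_eq_zero_AE)
      then show ?thesis using R0 unfolding V_def \<mu>_def by simp
    next
      case False
      then have pos: "V > 0" "\<mu> > 0" using V0 by auto
      have "(\<integral>x. indicator A x * v x powr r \<partial>M) \<le> r * (V / \<mu>) powr (r - 1) * V + (1 - r) * (V / \<mu>) powr r * \<mu>"
        using ineq[of "V / \<mu>"] pos unfolding V_def \<mu>_def by simp
      also have "r * (V / \<mu>) powr (r - 1) * V + (1 - r) * (V / \<mu>) powr r * \<mu> = \<mu> powr (1 - r) * V powr r"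
      proof -
        have e1: "(V / \<mu>) powr (r - 1) * V = \<mu> powr (1 - r) * V powr r"
          using pos by (simp add: powr_divide powr_diff divide_simps)
        have e2: "(V / \<mu>) powr r * \<mu> = \<mu> powr (1 - r) * V powr r"
          using pos by (simp add: powr_divide powr_diff divide_simps)
        have "r * (V / \<mu>) powr (r - 1) * V + (1 - r) * (V / \<mu>) powr r * \<mu> = r * ((V / \<mu>) powr (r - 1) * V) + (1 - r) * ((V / \<mu>) powr r * \<mu>)"
          by (simp add: algebra_simps)
        also have "\<dots> = \<mu> powr (1 - r) * V powr r" unfolding e1 e2 by (simp add: algebra_simps)
        finally show ?thesis .
      qed
      finally show ?thesis using r1 unfolding V_def \<mu>_def by (simp add: rpow_def)
    qed
  qed
qed
lemma mink2:
  fixes u v :: "'a \<Rightarrow> complex"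
  assumes [measurable]: "u \<in> borel_measurable M" "v \<in> borel_measurable M"
    and iu: "integrable M (\<lambda>x. (cmod (u x))\<^sup>2)" and iv: "integrable M (\<lambda>x. (cmod (v x))\<^sup>2)"
  shows "integrable M (\<lambda>x. (cmod (u x + v x))\<^sup>2)"
    and "sqrt (\<integral>x. (cmod (u x + v x))\<^sup>2 \<partial>M) \<le> sqrt (\<integral>x. (cmod (u x))\<^sup>2 \<partial>M) + sqrt (\<integral>x. (cmod (v x))\<^sup>2 \<partial>M)"
  using minkowski[of 2 u M v] iu iv by (simp_all add: powr_half_sqrt)

lemma Lp2D:
  assumes "Lp M 2 u"
  shows "u \<in> borel_measurable M" "integrable M (\<lambda>x. (cmod (u x))\<^sup>2)"
  using assms unfolding Lp_def by auto

lemma Lp2I: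
  assumes "u \<in> borel_measurable M" "integrable M (\<lambda>x. (cmod (u x))\<^sup>2)"
  shows "Lp M 2 u"
  using assms unfolding Lp_def by auto

lemma Lp2_diff:
  assumes "Lp M 2 u" "Lp M 2 v"
  shows "Lp M 2 (\<lambda>x. u x - v x)"
proof -
  have [measurable]: "u \<in> borel_measurable M" "v \<in> borel_measurable M" using assms Lp2D by auto
  have "integrable M (\<lambda>x. (cmod (- v x))\<^sup>2)" using Lp2D(2)[OF assms(2)] by simp
  from mink2(1)[of u M "\<lambda>x. - v x", OF _ _ Lp2D(2)[OF assms(1)] this]
  show ?thesis by (intro Lp2I) auto
qed

lemma L2_diff_le:
  assumes "Lp M 2 u" "Lp M 2 v"
  shows "sqrt (\<integral>x. (cmod (u x - v x))\<^sup>2 \<partial>M) \<le> sqrt (\<integral>x. (cmod (u x))\<^sup>2 \<partial>M) + sqrt (\<integral>x. (cmod (v x))\<^sup>2 \<partial>M)"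
proof -
  have [measurable]: "u \<in> borel_measurable M" "v \<in> borel_measurable M" using assms Lp2D by auto
  have "integrable M (\<lambda>x. (cmod (- v x))\<^sup>2)" using Lp2D(2)[OF assms(2)] by simp
  from mink2(2)[of u M "\<lambda>x. - v x", OF _ _ Lp2D(2)[OF assms(1)] this]
  show ?thesis by simp
qed

lemma L2_tri:
  assumes "Lp M 2 u" "Lp M 2 v" "Lp M 2 w"
  shows "sqrt (\<integral>x. (cmod (u x - w x))\<^sup>2 \<partial>M) \<le> sqrt (\<integral>x. (cmod (u x - v x))\<^sup>2 \<partial>M) + sqrt (\<integral>x. (cmod (v x - w x))\<^sup>2 \<partial>M)"
proof -
  have "Lp M 2 (\<lambda>x. u x - v x)" "Lp M 2 (\<lambda>x. v x - w x)" using assms Lp2_diff by auto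
  from mink2(2)[OF Lp2D(1)[OF this(1)] Lp2D(1)[OF this(2)] Lp2D(2)[OF this(1)] Lp2D(2)[OF this(2)]]
  show ?thesis by simp
qed

lemma nn_to_L:
  assumes "Lp M 2 u"
  shows "(\<integral>\<^sup>+x. ennreal ((cmod (u x))\<^sup>2) \<partial>M) = ennreal (\<integral>x. (cmod (u x))\<^sup>2 \<partial>M)"
  using Lp2D[OF assms] by (intro nn_integral_eq_integral) auto

lemma nn_to_L_diff:
  assumes "Lp M 2 u" "Lp M 2 v"
  shows "(\<integral>\<^sup>+x. ennreal ((cmod (u x - v x))\<^sup>2) \<partial>M) = ennreal (\<integral>x. (cmod (u x - v x))\<^sup>2 \<partial>M)"
  using nn_to_L[OF Lp2_diff[OF assms]] .

lemma L2_limit: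
  fixes f z :: "'a \<Rightarrow> complex" and g w :: "'b \<Rightarrow> complex"
  assumes f: "Lp M1 2 f" "Lp M1 2 z" "\<And>n. Lp M1 2 (F n)"
    and g: "Lp M2 2 g" "Lp M2 2 w" "\<And>n. Lp M2 2 (G n)"
    and Fl: "(\<lambda>n. \<integral>\<^sup>+x. ennreal ((cmod (F n x - f x))\<^sup>2) \<partial>M1) \<longlonglongrightarrow> 0"
    and Gl: "(\<lambda>n. \<integral>\<^sup>+x. ennreal ((cmod (G n x - g x))\<^sup>2) \<partial>M2) \<longlonglongrightarrow> 0"
    and eq: "\<And>n. (\<integral>x. (cmod (G n x - w x))\<^sup>2 \<partial>M2) = (\<integral>x. (cmod (F n x - z x))\<^sup>2 \<partial>M1)"
  shows "sqrt (\<integral>x. (cmod (g x - w x))\<^sup>2 \<partial>M2) \<le> sqrt (\<integral>x. (cmod (f x - z x))\<^sup>2 \<partial>M1)"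
proof -
  define a where "a n = sqrt (\<integral>x. (cmod (G n x - g x))\<^sup>2 \<partial>M2)" for n
  define b where "b n = sqrt (\<integral>x. (cmod (F n x - f x))\<^sup>2 \<partial>M1)" for n
  have a0: "a \<longlonglongrightarrow> 0"
  proof -
    have "(\<lambda>n. ennreal (\<integral>x. (cmod (G n x - g x))\<^sup>2 \<partial>M2)) \<longlonglongrightarrow> ennreal 0"
      using Gl by (simp add: nn_to_L_diff[OF g(3) g(1)])
    then have "(\<lambda>n. (\<integral>x. (cmod (G n x - g x))\<^sup>2 \<partial>M2)) \<longlonglongrightarrow> 0"
      by (subst (asm) tendsto_ennreal_iff) auto
    from tendsto_real_sqrt[OF this] show ?thesis unfolding a_def by simp
  qed
  have b0: "b \<longlonglongrightarrow> 0"
  proof -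
    have "(\<lambda>n. ennreal (\<integral>x. (cmod (F n x - f x))\<^sup>2 \<partial>M1)) \<longlonglongrightarrow> ennreal 0"
      using Fl by (simp add: nn_to_L_diff[OF f(3) f(1)])
    then have "(\<lambda>n. (\<integral>x. (cmod (F n x - f x))\<^sup>2 \<partial>M1)) \<longlonglongrightarrow> 0"
      by (subst (asm) tendsto_ennreal_iff) auto
    from tendsto_real_sqrt[OF this] show ?thesis unfolding b_def by simp
  qed
  have bound: "sqrt (\<integral>x. (cmod (g x - w x))\<^sup>2 \<partial>M2) \<le> a n + b n + sqrt (\<integral>x. (cmod (f x - z x))\<^sup>2 \<partial>M1)" for n
  proof -
    have "sqrt (\<integral>x. (cmod (g x - w x))\<^sup>2 \<partial>M2) \<le> sqrt (\<integral>x. (cmod (g x - G n x))\<^sup>2 \<partial>M2) + sqrt (\<integral>x. (cmod (G n x - w x))\<^sup>2 \<partial>M2)"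
      by (rule L2_tri[OF g(1) g(3) g(2)])
    also have "(\<integral>x. (cmod (g x - G n x))\<^sup>2 \<partial>M2) = (\<integral>x. (cmod (G n x - g x))\<^sup>2 \<partial>M2)"
      by (simp add: norm_minus_commute)
    also have "sqrt (\<integral>x. (cmod (G n x - w x))\<^sup>2 \<partial>M2) = sqrt (\<integral>x. (cmod (F n x - z x))\<^sup>2 \<partial>M1)"
      using eq by simp
    also have "\<dots> \<le> sqrt (\<integral>x. (cmod (F n x - f x))\<^sup>2 \<partial>M1) + sqrt (\<integral>x. (cmod (f x - z x))\<^sup>2 \<partial>M1)"
      by (rule L2_tri[OF f(3) f(1) f(2)])
    finally show ?thesis unfolding a_def b_def by simp
  qed
  have "(\<lambda>n. a n + b n + sqrt (\<integral>x. (cmod (f x - z x))\<^sup>2 \<partial>M1)) \<longlonglongrightarrow> 0 + 0 + sqrt (\<integral>x. (cmod (f x - z x))\<^sup>2 \<partial>M1)"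
    by (intro tendsto_intros a0 b0)
  then show ?thesis using bound by (intro LIMSEQ_le_const) auto
qed
lemma sqrt_rpow:
  assumes "x \<ge> 0"
  shows "sqrt (rpow x a) = rpow x (a / 2)"
  using assms by (auto simp: rpow_def powr_half_sqrt[symmetric] powr_powr)

lemma holder_sigma:
  fixes u :: "'a \<Rightarrow> complex" and q :: ereal
  assumes q: "2 \<le> q" and A[measurable]: "A \<in> sets M" and fin: "emeasure M A < \<infinity>"
    and [measurable]: "u \<in> borel_measurable M" and Lq: "Lq_norm_on M q A u \<le> ereal L"
  shows "sqrt (\<integral>x. indicator A x * (cmod (u x))\<^sup>2 \<partial>M) \<le> rpow (measure M A) (1/2 - inv_exp q) * L"
proof (cases "q = \<infinity>")
  case True
  have es: "esssup (restrict_space M A) (\<lambda>x. ereal (cmod (u x))) \<le> ereal L"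
    using Lq True unfolding Lq_norm_on_def by simp
  have "AE x in restrict_space M A. ereal (cmod (u x)) \<le> esssup (restrict_space M A) (\<lambda>x. ereal (cmod (u x)))"
    by (rule esssup_AE)
  then have "AE x in restrict_space M A. cmod (u x) \<le> L"
  proof (rule eventually_mono)
    fix x assume "ereal (cmod (u x)) \<le> esssup (restrict_space M A) (\<lambda>x. ereal (cmod (u x)))"
    then have "ereal (cmod (u x)) \<le> ereal L" using es by (rule order.trans)
    then show "cmod (u x) \<le> L" by simp
  qed
  then have ae: "AE x in M. x \<in> A \<longrightarrow> cmod (u x) \<le> L"
    by (subst (asm) AE_restrict_space_iff) auto
  have iA: "integrable M (indicator A :: _ \<Rightarrow> real)" using fin by (simp add: less_top[symmetric])
  have ptw: "AE x in M. indicator A x * (cmod (u x))\<^sup>2 \<le> L\<^sup>2 * indicator A x"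
    using ae by eventually_elim (auto simp: indicator_def intro!: power_mono)
  have int: "integrable M (\<lambda>x. indicator A x * (cmod (u x))\<^sup>2)"
    by (rule Bochner_Integration.integrable_bound[of _ "\<lambda>x. L\<^sup>2 * indicator A x"]) (use iA ptw in \<open>auto elim!: eventually_mono\<close>)
  have "(\<integral>x. indicator A x * (cmod (u x))\<^sup>2 \<partial>M) \<le> (\<integral>x. L\<^sup>2 * indicator A x \<partial>M)"
    by (rule integral_mono_AE[OF int _ ptw]) (use iA in auto)
  also have "\<dots> = L\<^sup>2 * measure M A" using fin by (simp add: less_top[symmetric])
  finally have le: "(\<integral>x. indicator A x * (cmod (u x))\<^sup>2 \<partial>M) \<le> L\<^sup>2 * measure M A" .
  have ie: "inv_exp q = 0" using True by (simp add: inv_exp_def)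
  show ?thesis
  proof (cases "measure M A = 0")
    case True
    then have "(\<integral>x. indicator A x * (cmod (u x))\<^sup>2 \<partial>M) \<le> 0" using le by simp
    moreover have "(\<integral>x. indicator A x * (cmod (u x))\<^sup>2 \<partial>M) \<ge> 0" by (auto intro!: integral_nonneg)
    ultimately show ?thesis using True ie by (simp add: rpow_def)
  next
    case False
    have L0: "L \<ge> 0"
    proof (rule ccontr)
      assume Lneg: "\<not> L \<ge> 0"
      from ae have "AE x in M. x \<notin> A" by (rule eventually_mono) (use Lneg norm_ge_zero in \<open>smt (verit)\<close>)
      then have "emeasure M A = 0" using sets.sets_into_space[OF A] by (subst (asm) AE_iff_measurable[of A]) auto
      then show False using False by (simp add: measure_def)
    qed
    have "sqrt (\<integral>x. indicator A x * (cmod (u x))\<^sup>2 \<partial>M) \<le> sqrt (L\<^sup>2 * measure M A)"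
      using le by simp
    also have "\<dots> = sqrt (measure M A) * L" using L0 by (simp add: real_sqrt_mult)
    finally show ?thesis using ie by (simp add: rpow_def powr_half_sqrt)
  qed
next
  case False
  then obtain r where qr: "q = ereal r" using q by (cases q) auto
  have r2: "r \<ge> 2" using q qr by simp
  define I where "I = (\<integral>\<^sup>+ x. indicator A x * ennreal (cmod (u x) powr r) \<partial>M)"
  have LqI: "Lq_norm_on M q A u = (if I = \<infinity> then \<infinity> else ereal (enn2real I powr (1 / r)))"
    unfolding Lq_norm_on_def I_def qr by simp
  have Ifin: "I \<noteq> \<infinity>" using Lq LqI by auto
  have IL: "enn2real I powr (1 / r) \<le> L" using Lq LqI Ifin by simp
  have I2: "(\<integral>\<^sup>+ x. ennreal (indicator A x * cmod (u x) powr r) \<partial>M) = ennreal (enn2real I)"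
    using Ifin unfolding I_def
    by (subst ennreal_enn2real) (auto simp: less_top intro!: nn_integral_cong split: split_indicator)
  have iv: "integrable M (\<lambda>x. indicator A x * cmod (u x) powr r)"
    by (rule integrableI_nn_integral_finite[OF _ _ I2]) auto
  have V: "(\<integral>x. indicator A x * cmod (u x) powr r \<partial>M) = enn2real I"
    using nn_integral_eq_integral[OF iv] I2 by (auto intro!: integral_nonneg)
  have "(\<integral>x. indicator A x * (cmod (u x) powr r) powr (2 / r) \<partial>M) \<le> rpow (measure M A) (1 - 2 / r) * (\<integral>x. indicator A x * cmod (u x) powr r \<partial>M) powr (2 / r)"
    using r2 fin by (intro conc_holder(2) iv) auto
  moreover have "(cmod (u x) powr r) powr (2 / r) = (cmod (u x))\<^sup>2" for x
    using r2 by (simp add: powr_powr)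
  ultimately have le: "(\<integral>x. indicator A x * (cmod (u x))\<^sup>2 \<partial>M) \<le> rpow (measure M A) (1 - 2 / r) * (enn2real I) powr (2 / r)"
    unfolding V by simp
  have "sqrt (\<integral>x. indicator A x * (cmod (u x))\<^sup>2 \<partial>M) \<le> sqrt (rpow (measure M A) (1 - 2 / r) * (enn2real I) powr (2 / r))"
    using le by simp
  also have "\<dots> = rpow (measure M A) (1/2 - 1 / r) * (enn2real I) powr (1 / r)"
    by (simp add: real_sqrt_mult sqrt_rpow powr_half_sqrt[symmetric] powr_powr diff_divide_distrib)
  also have "\<dots> \<le> rpow (measure M A) (1/2 - 1 / r) * L"
    using IL by (intro mult_left_mono) (auto simp: rpow_def)
  finally show ?thesis using qr by (simp add: inv_exp_def)
qed

lemma sq_powr: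
  fixes t p :: real
  assumes "t \<ge> 0"
  shows "(t\<^sup>2) powr (p / 2) = t powr p"
proof -
  have "t\<^sup>2 = t powr 2" using assms by simp
  then show ?thesis using assms by (simp add: powr_powr del: powr_numeral)
qed

lemma rpow_powr:
  fixes x a p :: real
  assumes "x \<ge> 0" "p > 0"
  shows "(rpow x a) powr (1 / p) = rpow x (a / p)"
  using assms by (auto simp: rpow_def powr_powr)

lemma rpow_nonneg: "x \<ge> 0 \<Longrightarrow> rpow x a \<ge> 0"
  by (auto simp: rpow_def)

lemma t_le_sq: "(t::real) \<le> 1 + t\<^sup>2"
proof -
  have "0 \<le> (t - 1)\<^sup>2" by simp
  then have "2 * t \<le> t\<^sup>2 + 1" by (simp add: power2_diff)
  moreover have "0 \<le> t\<^sup>2" by simp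
  ultimately show ?thesis by linarith
qed

context
  fixes m :: "'g::{topological_group_add, ab_group_add, t2_space} measure"
    and mh :: "('g \<Rightarrow> complex) measure" and c :: real
  assumes msets: "sets m = sets borel" and mhspace: "space mh \<subseteq> dual_group"
    and cU: "fourier_unitary c m mh"
begin

lemma c_pos: "c > 0" using cU unfolding fourier_unitary_def by auto

lemma char_meas:
  assumes "\<xi> \<in> space mh"
  shows "\<xi> \<in> borel_measurable m" "\<And>x. cmod (\<xi> x) = 1" "(\<lambda>x. cnj (\<xi> x)) \<in> borel_measurable m"
proof -
  have "is_character \<xi>" using assms mhspace unfolding dual_group_def by auto
  then have "continuous_on UNIV \<xi>" "\<And>x. cmod (\<xi> x) = 1" unfolding is_character_def by auto
  then show "\<xi> \<in> borel_measurable m" "\<And>x. cmod (\<xi> x) = 1"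
    using borel_measurable_continuous_onI measurable_cong_sets[OF msets refl] by auto
  have "continuous_on UNIV (\<lambda>x. cnj (\<xi> x))" using \<open>continuous_on UNIV \<xi>\<close> by (intro continuous_intros)
  then show "(\<lambda>x. cnj (\<xi> x)) \<in> borel_measurable m"
    using borel_measurable_continuous_onI measurable_cong_sets[OF msets refl] by auto
qed

lemma int_char:
  assumes "integrable m u" "\<xi> \<in> space mh"
  shows "integrable m (\<lambda>x. u x * cnj (\<xi> x))"
proof (rule Bochner_Integration.integrable_bound[OF assms(1)])
  show "(\<lambda>x. u x * cnj (\<xi> x)) \<in> borel_measurable m" using char_meas(3)[OF assms(2)] assms(1) by measurable
  show "AE x in m. norm (u x * cnj (\<xi> x)) \<le> norm (u x)" using char_meas(2)[OF assms(2)] by (simp add: norm_mult)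
qed

lemma fourier_diff:
  assumes "integrable m u" "integrable m v" "\<xi> \<in> space mh"
  shows "fourier c m (\<lambda>x. u x - v x) \<xi> = fourier c m u \<xi> - fourier c m v \<xi>"
  using int_char[OF assms(1,3)] int_char[OF assms(2,3)]
  unfolding fourier_def by (simp add: algebra_simps)

lemma fourier_add:
  assumes "integrable m u" "integrable m v" "\<xi> \<in> space mh"
  shows "fourier c m (\<lambda>x. u x + v x) \<xi> = fourier c m u \<xi> + fourier c m v \<xi>"
  using int_char[OF assms(1,3)] int_char[OF assms(2,3)]
  unfolding fourier_def by (simp add: algebra_simps)

lemma fourier_bound:
  assumes "integrable m u" "\<xi> \<in> space mh"
  shows "cmod (fourier c m u \<xi>) \<le> c * (\<integral>x. cmod (u x) \<partial>m)"
proof -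
  have "cmod (\<integral>x. u x * cnj (\<xi> x) \<partial>m) \<le> (\<integral>x. cmod (u x * cnj (\<xi> x)) \<partial>m)"
    by (rule integral_norm_bound)
  also have "\<dots> = (\<integral>x. cmod (u x) \<partial>m)" using char_meas(2)[OF assms(2)] by (simp add: norm_mult)
  finally show ?thesis using c_pos unfolding fourier_def by (simp add: norm_mult)
qed

lemma iso:
  assumes "integrable m u" "Lp m 2 u"
  shows "Lp mh 2 (fourier c m u)" "(\<integral>\<xi>. (cmod (fourier c m u \<xi>))\<^sup>2 \<partial>mh) = (\<integral>x. (cmod (u x))\<^sup>2 \<partial>m)"
proof -
  have meas: "fourier c m u \<in> borel_measurable mh"
    and eq: "(\<integral>\<^sup>+ \<xi>. ennreal ((cmod (fourier c m u \<xi>))\<^sup>2) \<partial>mh) = (\<integral>\<^sup>+ x. ennreal ((cmod (u x))\<^sup>2) \<partial>m)"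
    using cU assms unfolding fourier_unitary_def by auto
  have e2: "(\<integral>\<^sup>+ x. ennreal ((cmod (u x))\<^sup>2) \<partial>m) = ennreal (\<integral>x. (cmod (u x))\<^sup>2 \<partial>m)"
    by (rule nn_to_L[OF assms(2)])
  have int: "integrable mh (\<lambda>\<xi>. (cmod (fourier c m u \<xi>))\<^sup>2)"
    by (rule integrableI_nn_integral_finite[OF _ _ eq[unfolded e2]]) (use meas in auto)
  show L: "Lp mh 2 (fourier c m u)" by (rule Lp2I[OF meas int])
  show "(\<integral>\<xi>. (cmod (fourier c m u \<xi>))\<^sup>2 \<partial>mh) = (\<integral>x. (cmod (u x))\<^sup>2 \<partial>m)"
    using eq unfolding e2 nn_to_L[OF L]
    by (subst (asm) ennreal_inj) (auto intro!: integral_nonneg)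
qed


lemma split_est:
  fixes \<psi> :: "'g \<Rightarrow> complex" and p :: real
  assumes p: "1 \<le> p" "p \<le> 2" and ip: "integrable m \<psi>" and ipp: "integrable m (\<lambda>x. cmod (\<psi> x) powr p)"
    and fm: "fourier c m \<psi> \<in> borel_measurable mh"
    and Sig: "\<Sigma> \<in> sets mh" "emeasure mh \<Sigma> < \<infinity>"
  shows "integrable mh (\<lambda>\<xi>. indicator \<Sigma> \<xi> * (cmod (fourier c m \<psi> \<xi>))\<^sup>2)"
    and "(\<integral>\<xi>. indicator \<Sigma> \<xi> * (cmod (fourier c m \<psi> \<xi>))\<^sup>2 \<partial>mh)
          \<le> 2 * measure mh \<Sigma> * (c * (\<integral>x. cmod (\<psi> x) powr p \<partial>m))\<^sup>2 + 2 * (\<integral>x. cmod (\<psi> x) powr p \<partial>m)"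
proof -
  define \<delta> where "\<delta> = (\<integral>x. cmod (\<psi> x) powr p \<partial>m)"
  define a where "a x = (if cmod (\<psi> x) > 1 then \<psi> x else 0)" for x
  define b where "b x = (if cmod (\<psi> x) > 1 then 0 else \<psi> x)" for x
  have [measurable]: "\<psi> \<in> borel_measurable m" using ip by auto
  have [measurable]: "a \<in> borel_measurable m" "b \<in> borel_measurable m" unfolding a_def b_def by measurable
  have ia: "integrable m a"
    by (rule Bochner_Integration.integrable_bound[OF ip]) (auto simp: a_def)
  have ib: "integrable m b"
    by (rule Bochner_Integration.integrable_bound[OF ip]) (auto simp: b_def)
  have pa: "cmod (a x) \<le> cmod (\<psi> x) powr p" for x
  proof (cases "cmod (\<psi> x) > 1")
    case True
    then have "cmod (\<psi> x) powr 1 \<le> cmod (\<psi> x) powr p" using p by (intro powr_mono) auto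
    then show ?thesis using True by (simp add: a_def)
  qed (simp add: a_def)
  have pb: "(cmod (b x))\<^sup>2 \<le> cmod (\<psi> x) powr p" for x
  proof (cases "cmod (\<psi> x) > 1")
    case False
    then have "cmod (\<psi> x) powr 2 \<le> cmod (\<psi> x) powr p" using p by (intro powr_mono') auto
    then show ?thesis using False by (simp add: b_def)
  qed (simp add: b_def)
  have ib2: "integrable m (\<lambda>x. (cmod (b x))\<^sup>2)"
    by (rule Bochner_Integration.integrable_bound[OF ipp]) (use pb in auto)
  have Lb: "Lp m 2 b" by (rule Lp2I) (auto intro: ib2)
  note isob = iso[OF ib Lb]
  have fbm[measurable]: "fourier c m b \<in> borel_measurable mh" using Lp2D(1)[OF isob(1)] .
  have ib2h: "integrable mh (\<lambda>\<xi>. (cmod (fourier c m b \<xi>))\<^sup>2)" using Lp2D(2)[OF isob(1)] .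
  have bint: "(\<integral>\<xi>. (cmod (fourier c m b \<xi>))\<^sup>2 \<partial>mh) \<le> \<delta>"
    unfolding isob(2) \<delta>_def by (rule integral_mono[OF ib2 ipp pb])
  have aint: "(\<integral>x. cmod (a x) \<partial>m) \<le> \<delta>"
    unfolding \<delta>_def by (rule integral_mono[OF _ ipp pa]) (use ia in auto)
  have split: "fourier c m \<psi> \<xi> = fourier c m a \<xi> + fourier c m b \<xi>" if "\<xi> \<in> space mh" for \<xi>
  proof -
    have "\<psi> = (\<lambda>x. a x + b x)" by (auto simp: a_def b_def)
    then show ?thesis using fourier_add[OF ia ib that] by simp
  qed
  have abound: "cmod (fourier c m a \<xi>) \<le> c * \<delta>" if "\<xi> \<in> space mh" for \<xi>
    using fourier_bound[OF ia that] aint c_pos by (smt (verit) mult_left_mono)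
  have iS: "integrable mh (indicator \<Sigma> :: _ \<Rightarrow> real)"
    using Sig by (simp add: less_top[symmetric])
  have ptw: "indicator \<Sigma> \<xi> * (cmod (fourier c m \<psi> \<xi>))\<^sup>2 \<le> 2 * (c * \<delta>)\<^sup>2 * indicator \<Sigma> \<xi> + 2 * (cmod (fourier c m b \<xi>))\<^sup>2"
    if "\<xi> \<in> space mh" for \<xi>
  proof -
    have "(cmod (fourier c m \<psi> \<xi>))\<^sup>2 \<le> (cmod (fourier c m a \<xi>) + cmod (fourier c m b \<xi>))\<^sup>2"
      unfolding split[OF that] by (intro power_mono norm_triangle_ineq) auto
    also have "\<dots> \<le> 2 * (cmod (fourier c m a \<xi>))\<^sup>2 + 2 * (cmod (fourier c m b \<xi>))\<^sup>2"
      by (smt (verit) sum_squares_bound power2_sum)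
    also have "(cmod (fourier c m a \<xi>))\<^sup>2 \<le> (c * \<delta>)\<^sup>2"
      using abound[OF that] by (intro power_mono) auto
    finally have *: "(cmod (fourier c m \<psi> \<xi>))\<^sup>2 \<le> 2 * (c * \<delta>)\<^sup>2 + 2 * (cmod (fourier c m b \<xi>))\<^sup>2" by simp
    show ?thesis by (cases "\<xi> \<in> \<Sigma>") (use * in auto)
  qed
  have irhs: "integrable mh (\<lambda>\<xi>. 2 * (c * \<delta>)\<^sup>2 * indicator \<Sigma> \<xi> + 2 * (cmod (fourier c m b \<xi>))\<^sup>2)"
    using iS ib2h by auto
  show int: "integrable mh (\<lambda>\<xi>. indicator \<Sigma> \<xi> * (cmod (fourier c m \<psi> \<xi>))\<^sup>2)"
    by (rule Bochner_Integration.integrable_bound[OF irhs]) (use ptw Sig fm in auto)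
  have "(\<integral>\<xi>. indicator \<Sigma> \<xi> * (cmod (fourier c m \<psi> \<xi>))\<^sup>2 \<partial>mh) \<le>
        (\<integral>\<xi>. 2 * (c * \<delta>)\<^sup>2 * indicator \<Sigma> \<xi> + 2 * (cmod (fourier c m b \<xi>))\<^sup>2 \<partial>mh)"
    by (rule integral_mono[OF int irhs ptw])
  also have "\<dots> = 2 * (c * \<delta>)\<^sup>2 * measure mh \<Sigma> + 2 * (\<integral>\<xi>. (cmod (fourier c m b \<xi>))\<^sup>2 \<partial>mh)"
    using iS ib2h Sig by (simp add: less_top[symmetric])
  also have "\<dots> \<le> 2 * (c * \<delta>)\<^sup>2 * measure mh \<Sigma> + 2 * \<delta>" using bint by simp
  finally show "(\<integral>\<xi>. indicator \<Sigma> \<xi> * (cmod (fourier c m \<psi> \<xi>))\<^sup>2 \<partial>mh)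
          \<le> 2 * measure mh \<Sigma> * (c * (\<integral>x. cmod (\<psi> x) powr p \<partial>m))\<^sup>2 + 2 * (\<integral>x. cmod (\<psi> x) powr p \<partial>m)"
    unfolding \<delta>_def by (simp add: algebra_simps)
qed


lemma ext_est:
  fixes h :: "'g \<Rightarrow> complex" and p K0 :: real
  assumes p: "1 \<le> p" "p \<le> 2" and SG: "test_class c m SG"
    and Sig: "\<Sigma> \<in> sets mh" "emeasure mh \<Sigma> < \<infinity>"
    and SGb: "\<And>\<phi>. \<phi> \<in> SG \<Longrightarrow> sqrt (\<integral>\<xi>. indicator \<Sigma> \<xi> * (cmod (fourier c m \<phi> \<xi>))\<^sup>2 \<partial>mh) \<le> K0 * Lp_norm m p \<phi>"
    and K0: "K0 \<ge> 0"
    and ih: "integrable m h" and L2h: "Lp m 2 h" and ihp: "integrable m (\<lambda>x. cmod (h x) powr p)"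
  shows "sqrt (\<integral>\<xi>. indicator \<Sigma> \<xi> * (cmod (fourier c m h \<xi>))\<^sup>2 \<partial>mh) \<le> K0 * Lp_norm m p h"
proof -
  define X where "X = sqrt (\<integral>\<xi>. indicator \<Sigma> \<xi> * (cmod (fourier c m h \<xi>))\<^sup>2 \<partial>mh)"
  define P where "P = Lp_norm m p h"
  define C where "C = 2 * measure mh \<Sigma> * c\<^sup>2 + 2"
  have hm[measurable]: "h \<in> borel_measurable m" using ih by auto
  have Lph: "Lp m p h" unfolding Lp_def using ihp by auto
  note iso_h = iso[OF ih L2h]
  have fhm[measurable]: "fourier c m h \<in> borel_measurable mh" using Lp2D(1)[OF iso_h(1)] .
  have fh2: "integrable mh (\<lambda>\<xi>. (cmod (fourier c m h \<xi>))\<^sup>2)" using Lp2D(2)[OF iso_h(1)] .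
  have C0: "C \<ge> 0" unfolding C_def by auto
  have main: "X \<le> K0 * P + K0 * e + sqrt (C * e)" if e: "0 < e" "e \<le> 1" for e
  proof -
    obtain \<phi> where \<phi>: "\<phi> \<in> SG" and close: "Lp_norm m p (\<lambda>x. h x - \<phi> x) < e"
      using SG Lph e p unfolding test_class_def by blast
    have i\<phi>: "integrable m \<phi>" and L2\<phi>: "Lp m 2 \<phi>" and Lp\<phi>: "Lp m p \<phi>"
      using SG \<phi> p unfolding test_class_def by auto
    have \<phi>m[measurable]: "\<phi> \<in> borel_measurable m" using i\<phi> by auto
    have ip\<phi>: "integrable m (\<lambda>x. cmod (\<phi> x) powr p)" using Lp\<phi> unfolding Lp_def by auto
    define \<psi> where "\<psi> x = \<phi> x - h x" for x
    have \<psi>m[measurable]: "\<psi> \<in> borel_measurable m" unfolding \<psi>_def by measurable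
    have i\<psi>: "integrable m \<psi>" unfolding \<psi>_def using i\<phi> ih by auto
    have ipm: "integrable m (\<lambda>x. cmod (- h x) powr p)" using ihp by simp
    have ip\<psi>: "integrable m (\<lambda>x. cmod (\<psi> x) powr p)"
      unfolding \<psi>_def using minkowski(1)[OF p(1) \<phi>m _ ip\<phi> ipm] by simp
    have L2\<psi>: "Lp m 2 \<psi>" unfolding \<psi>_def by (rule Lp2_diff[OF L2\<phi> L2h])
    note iso_\<psi> = iso[OF i\<psi> L2\<psi>]
    have f\<psi>m[measurable]: "fourier c m \<psi> \<in> borel_measurable mh" using Lp2D(1)[OF iso_\<psi>(1)] .
    note iso_\<phi> = iso[OF i\<phi> L2\<phi>]
    have f\<phi>m[measurable]: "fourier c m \<phi> \<in> borel_measurable mh" using Lp2D(1)[OF iso_\<phi>(1)] .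
    define \<delta> where "\<delta> = (\<integral>x. cmod (\<psi> x) powr p \<partial>m)"
    have \<delta>0: "\<delta> \<ge> 0" unfolding \<delta>_def by (auto intro!: integral_nonneg)
    have "Lp_norm m p (\<lambda>x. h x - \<phi> x) = \<delta> powr (1/p)"
      unfolding Lp_norm_def \<delta>_def \<psi>_def by (simp add: norm_minus_commute)
    then have "\<delta> powr (1/p) < e" using close by simp
    then have "(\<delta> powr (1/p)) powr p < e powr p" using p \<delta>0 by (intro powr_less_mono2) auto
    then have "\<delta> < e powr p" using p \<delta>0 by (simp add: powr_powr)
    also have "e powr p \<le> e powr 1" using e p by (intro powr_mono') auto
    finally have \<delta>e: "\<delta> < e" using e by simp
    have se: "(\<integral>\<xi>. indicator \<Sigma> \<xi> * (cmod (fourier c m \<psi> \<xi>))\<^sup>2 \<partial>mh) \<le> 2 * measure mh \<Sigma> * (c * \<delta>)\<^sup>2 + 2 * \<delta>"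
      using split_est(2)[OF p i\<psi> ip\<psi> f\<psi>m Sig] unfolding \<delta>_def .
    have "(c * \<delta>)\<^sup>2 \<le> c\<^sup>2 * e"
    proof -
      have "\<delta>\<^sup>2 \<le> e\<^sup>2" using \<delta>0 \<delta>e by (intro power_mono) auto
      also have "e\<^sup>2 \<le> e" using e by (simp add: power2_eq_square mult_le_cancel_right1)
      finally show ?thesis by (simp add: power_mult_distrib mult_left_mono)
    qed
    then have "2 * measure mh \<Sigma> * (c * \<delta>)\<^sup>2 + 2 * \<delta> \<le> C * e"
    proof -
      have "2 * measure mh \<Sigma> * (c * \<delta>)\<^sup>2 \<le> 2 * measure mh \<Sigma> * (c\<^sup>2 * e)"
        using \<open>(c * \<delta>)\<^sup>2 \<le> c\<^sup>2 * e\<close> by (intro mult_left_mono) auto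
      then show ?thesis unfolding C_def using \<delta>e by (simp add: algebra_simps)
    qed
    with se have se2: "(\<integral>\<xi>. indicator \<Sigma> \<xi> * (cmod (fourier c m \<psi> \<xi>))\<^sup>2 \<partial>mh) \<le> C * e" by simp
    define u where "u \<xi> = (if \<xi> \<in> \<Sigma> then fourier c m \<phi> \<xi> else 0)" for \<xi>
    define v where "v \<xi> = (if \<xi> \<in> \<Sigma> then - fourier c m \<psi> \<xi> else 0)" for \<xi>
    have [measurable]: "u \<in> borel_measurable mh" "v \<in> borel_measurable mh" unfolding u_def v_def using Sig by measurable
    have iS: "integrable mh (\<lambda>\<xi>. indicator \<Sigma> \<xi> * (cmod (fourier c m \<psi> \<xi>))\<^sup>2)"
      by (rule split_est(1)[OF p i\<psi> ip\<psi> f\<psi>m Sig])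
    have i\<phi>2: "integrable mh (\<lambda>\<xi>. (cmod (fourier c m \<phi> \<xi>))\<^sup>2)" using Lp2D(2)[OF iso_\<phi>(1)] .
    have eu: "(cmod (u \<xi>))\<^sup>2 = indicator \<Sigma> \<xi> * (cmod (fourier c m \<phi> \<xi>))\<^sup>2" for \<xi>
      by (simp add: u_def indicator_def)
    have ev: "(cmod (v \<xi>))\<^sup>2 = indicator \<Sigma> \<xi> * (cmod (fourier c m \<psi> \<xi>))\<^sup>2" for \<xi>
      by (simp add: v_def indicator_def)
    have iu: "integrable mh (\<lambda>\<xi>. (cmod (u \<xi>))\<^sup>2)"
    proof -
      have mS: "(\<lambda>\<xi>. indicator \<Sigma> \<xi> * (cmod (fourier c m \<phi> \<xi>))\<^sup>2) \<in> borel_measurable mh"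
        using Sig by measurable
      show ?thesis
        unfolding eu by (rule Bochner_Integration.integrable_bound[OF i\<phi>2 mS]) (auto split: split_indicator)
    qed
    have iv: "integrable mh (\<lambda>\<xi>. (cmod (v \<xi>))\<^sup>2)" unfolding ev by (rule iS)
    have euv: "(cmod (u \<xi> + v \<xi>))\<^sup>2 = indicator \<Sigma> \<xi> * (cmod (fourier c m h \<xi>))\<^sup>2" if "\<xi> \<in> space mh" for \<xi>
    proof -
      have "fourier c m \<psi> \<xi> = fourier c m \<phi> \<xi> - fourier c m h \<xi>"
        unfolding \<psi>_def by (rule fourier_diff[OF i\<phi> ih that])
      then show ?thesis by (simp add: u_def v_def indicator_def)
    qed
    have lphi: "Lp_norm m p \<phi> \<le> P + e"
    proof -
      have "Lp_norm m p \<phi> = (\<integral>x. cmod (h x + \<psi> x) powr p \<partial>m) powr (1/p)"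
        unfolding Lp_norm_def \<psi>_def by simp
      also have "\<dots> \<le> P + \<delta> powr (1/p)"
        unfolding P_def Lp_norm_def \<delta>_def by (rule minkowski(2)[OF p(1) hm \<psi>m ihp ip\<psi>])
      also have "\<delta> powr (1/p) \<le> e" using \<open>\<delta> powr (1/p) < e\<close> by simp
      finally show ?thesis by simp
    qed
    have Kphi: "K0 * Lp_norm m p \<phi> \<le> K0 * (P + e)" using lphi K0 by (rule mult_left_mono)
    have "X = sqrt (\<integral>\<xi>. (cmod (u \<xi> + v \<xi>))\<^sup>2 \<partial>mh)"
      unfolding X_def by (simp add: euv cong: Bochner_Integration.integral_cong)
    also have "\<dots> \<le> sqrt (\<integral>\<xi>. (cmod (u \<xi>))\<^sup>2 \<partial>mh) + sqrt (\<integral>\<xi>. (cmod (v \<xi>))\<^sup>2 \<partial>mh)"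
      by (rule mink2(2)) (auto intro: iu iv)
    also have "sqrt (\<integral>\<xi>. (cmod (u \<xi>))\<^sup>2 \<partial>mh) \<le> K0 * Lp_norm m p \<phi>"
      unfolding eu using SGb[OF \<phi>] .
    also have "\<dots> \<le> K0 * (P + e)" by (rule Kphi)
    also have "sqrt (\<integral>\<xi>. (cmod (v \<xi>))\<^sup>2 \<partial>mh) \<le> sqrt (C * e)"
      unfolding ev using se2 by simp
    finally show ?thesis by (simp add: algebra_simps)
  qed
  have lim: "((\<lambda>e. K0 * P + K0 * e + sqrt (C * e)) \<longlongrightarrow> K0 * P + K0 * 0 + sqrt (C * 0)) (at_right 0)"
    by (intro tendsto_intros)
  have ev: "eventually (\<lambda>e. X \<le> K0 * P + K0 * e + sqrt (C * e)) (at_right (0::real))"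
    unfolding eventually_at_right_field by (intro exI[of _ 1]) (auto intro!: main)
  have "X \<le> K0 * P + K0 * 0 + sqrt (C * 0)"
    by (rule tendsto_lowerbound[OF lim ev]) simp
  then show ?thesis unfolding X_def P_def by simp
qed


end

theorem theorem2p1:
  fixes m :: "'g::{topological_group_add, ab_group_add, t2_space} measure"
    and mh :: "('g \<Rightarrow> complex) measure"
    and c :: real and SG :: "('g \<Rightarrow> complex) set"
    and p :: real and q :: ereal and \<rho> :: real
    and S :: "'g set" and \<Sigma> :: "('g \<Rightarrow> complex) set"
  assumes G: "lca_group TYPE('g)"
    and m: "haar_measure (euclidean :: 'g topology) (+) m"
    and mh: "haar_measure (dual_top :: ('g \<Rightarrow> complex) topology) dual_mult mh"
    and c: "fourier_unitary c m mh"
    and SG: "test_class c m SG"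
    and pq: "1 \<le> p" "p \<le> 2" "2 \<le> q"
    and S: "S \<in> sets m" "emeasure m S < \<infinity>"
    and \<Sigma>: "\<Sigma> \<in> sets mh" "emeasure mh \<Sigma> < \<infinity>"
    and restr: "restriction_estimate c m mh SG p q \<Sigma> \<rho>"
    and small: "\<rho> * rpow (measure m S) (1/p - 1/2) * rpow (measure mh \<Sigma>) (1/2 - inv_exp q) < 1"
  shows "\<forall>f g. fourier_L2 c m mh f g \<longrightarrow>
    sqrt (\<integral>x. (cmod (f x))\<^sup>2 \<partial>m) \<le>
      (1 / (1 - \<rho> * rpow (measure m S) (1/p - 1/2) * rpow (measure mh \<Sigma>) (1/2 - inv_exp q))) *
      (sqrt (\<integral>x. indicator (UNIV - S) x * (cmod (f x))\<^sup>2 \<partial>m) +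
       sqrt (\<integral>\<xi>. indicator (space mh - \<Sigma>) \<xi> * (cmod (g \<xi>))\<^sup>2 \<partial>mh))"
proof -
  have msets: "sets m = sets borel"
  proof -
    have "{U. openin (euclidean :: 'g topology) U} = {S. open S}" by auto
    then show ?thesis using m unfolding haar_measure_def borel_sets_of_def by (simp add: sets_borel)
  qed
  have mspace: "space m = UNIV" using sets_eq_imp_space_eq[OF msets] by simp
  have mhspace: "space mh \<subseteq> dual_group"
    using mh unfolding haar_measure_def dual_top_def by auto
  note iso' = iso[OF msets mhspace c]
  note fourier_diff' = fourier_diff[OF msets mhspace c]
  note ext_est' = ext_est[OF msets mhspace c]
  define s where "s = rpow (measure m S) (1/p - 1/2)"
  define \<sigma> where "\<sigma> = rpow (measure mh \<Sigma>) (1/2 - inv_exp q)"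
  define \<kappa> where "\<kappa> = \<rho> * s * \<sigma>"
  have s0: "s \<ge> 0" and \<sigma>0: "\<sigma> \<ge> 0" unfolding s_def \<sigma>_def by (auto intro: rpow_nonneg)
  have k1: "\<kappa> < 1" using small unfolding \<kappa>_def s_def \<sigma>_def .
  have SGb: "sqrt (\<integral>\<xi>. indicator \<Sigma> \<xi> * (cmod (fourier c m \<phi> \<xi>))\<^sup>2 \<partial>mh) \<le> (\<sigma> * \<rho>) * Lp_norm m p \<phi>"
    if "\<phi> \<in> SG" for \<phi>
  proof -
    have "integrable m \<phi>" "Lp m 2 \<phi>" using SG that unfolding test_class_def by auto
    then have fm: "fourier c m \<phi> \<in> borel_measurable mh" using Lp2D(1)[OF iso'(1)] by auto
    have "Lq_norm_on mh q \<Sigma> (fourier c m \<phi>) \<le> ereal (\<rho> * Lp_norm m p \<phi>)"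
      using restr that unfolding restriction_estimate_def by auto
    from holder_sigma[OF pq(3) \<Sigma>(1) \<Sigma>(2) fm this]
    show ?thesis unfolding \<sigma>_def by (simp add: algebra_simps)
  qed
  show ?thesis
  proof (intro allI impI)
    fix f g assume fg: "fourier_L2 c m mh f g"
    then obtain F where Lf: "Lp m 2 f" and Lg: "Lp mh 2 g"
      and FF: "\<And>n. integrable m (F n) \<and> Lp m 2 (F n) \<and> fourier c m (F n) \<in> borel_measurable mh"
      and Fl: "(\<lambda>n. \<integral>\<^sup>+ x. ennreal ((cmod (F n x - f x))\<^sup>2) \<partial>m) \<longlonglongrightarrow> 0"
      and Gl: "(\<lambda>n. \<integral>\<^sup>+ \<xi>. ennreal ((cmod (fourier c m (F n) \<xi> - g \<xi>))\<^sup>2) \<partial>mh) \<longlonglongrightarrow> 0"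
      unfolding fourier_L2_def by blast
    have fm[measurable]: "f \<in> borel_measurable m" and if2: "integrable m (\<lambda>x. (cmod (f x))\<^sup>2)" using Lp2D[OF Lf] by auto
    have gm[measurable]: "g \<in> borel_measurable mh" and ig2: "integrable mh (\<lambda>x. (cmod (g x))\<^sup>2)" using Lp2D[OF Lg] by auto
    define Nf where "Nf = sqrt (\<integral>x. (cmod (f x))\<^sup>2 \<partial>m)"
    define K where "K = sqrt (\<integral>x. indicator (UNIV - S) x * (cmod (f x))\<^sup>2 \<partial>m)"
    define Gn where "Gn = sqrt (\<integral>\<xi>. indicator (space mh - \<Sigma>) \<xi> * (cmod (g \<xi>))\<^sup>2 \<partial>mh)"
    have K0: "K \<ge> 0" "Gn \<ge> 0" unfolding K_def Gn_def by (auto intro!: integral_nonneg)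
    have goal: "Nf \<le> (1 / (1 - \<kappa>)) * (K + Gn)"
    proof (cases "\<sigma> * \<rho> < 0")
      case True
      have zero: "AE x in m. \<phi> x = 0" if "\<phi> \<in> SG" for \<phi>
      proof -
        have Lp\<phi>: "Lp m p \<phi>" using SG that pq unfolding test_class_def by auto
        have "0 \<le> sqrt (\<integral>\<xi>. indicator \<Sigma> \<xi> * (cmod (fourier c m \<phi> \<xi>))\<^sup>2 \<partial>mh)" by simp
        also have "\<dots> \<le> (\<sigma> * \<rho>) * Lp_norm m p \<phi>" by (rule SGb[OF that])
        finally have "0 \<le> (\<sigma> * \<rho>) * Lp_norm m p \<phi>" .
        moreover have "Lp_norm m p \<phi> \<ge> 0" unfolding Lp_norm_def by simp
        ultimately have "Lp_norm m p \<phi> = 0" using True mult_neg_pos[of "\<sigma> * \<rho>" "Lp_norm m p \<phi>"] by linarith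
        then have "(\<integral>x. cmod (\<phi> x) powr p \<partial>m) = 0" unfolding Lp_norm_def by simp
        then have "AE x in m. cmod (\<phi> x) powr p = 0"
          using integral_nonneg_eq_0_iff_AE[of m "\<lambda>x. cmod (\<phi> x) powr p"] Lp\<phi> unfolding Lp_def by auto
        then show ?thesis by eventually_elim simp
      qed
      have "Lp_norm m 2 f \<le> e" if "e > 0" for e
      proof -
        obtain \<phi> where \<phi>: "\<phi> \<in> SG" "Lp_norm m 2 (\<lambda>x. f x - \<phi> x) < e"
          using SG Lf \<open>e > 0\<close> unfolding test_class_def by (metis one_le_numeral)
        have [measurable]: "\<phi> \<in> borel_measurable m" using SG \<phi>(1) unfolding test_class_def by auto
        have "Lp_norm m 2 (\<lambda>x. f x - \<phi> x) = Lp_norm m 2 f"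
          unfolding Lp_norm_def using zero[OF \<phi>(1)]
          by (intro arg_cong[where f="\<lambda>t. t powr (1/2)"] integral_cong_AE) (auto elim!: eventually_mono)
        then show ?thesis using \<phi>(2) by simp
      qed
      then have "Lp_norm m 2 f \<le> 0" using field_le_epsilon[of "Lp_norm m 2 f" 0] by simp
      moreover have "Lp_norm m 2 f = Nf" unfolding Lp_norm_def Nf_def
        by (simp add: powr_half_sqrt integral_nonneg)
      ultimately have "Nf \<le> 0" by simp
      moreover have "0 \<le> (1 / (1 - \<kappa>)) * (K + Gn)" using k1 K0 by simp
      ultimately show ?thesis by linarith
    next
      case False
      then have sr0: "\<sigma> * \<rho> \<ge> 0" by simp
      define h where "h x = (if x \<in> S then f x else 0)" for x
      have Sm[measurable]: "S \<in> sets m" using S(1) .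
      have hm[measurable]: "h \<in> borel_measurable m" unfolding h_def by measurable
      have iS: "integrable m (indicator S :: _ \<Rightarrow> real)" using S(2) by (simp add: less_top[symmetric])
      have ih: "integrable m h"
      proof (rule Bochner_Integration.integrable_bound[of _ "\<lambda>x. indicator S x + (cmod (f x))\<^sup>2"])
        show "integrable m (\<lambda>x. indicator S x + (cmod (f x))\<^sup>2)" using iS if2 by auto
        show "AE x in m. norm (h x) \<le> norm (indicator S x + (cmod (f x))\<^sup>2 :: real)"
          using t_le_sq by (auto simp: h_def indicator_def)
      qed auto
      have ih2: "integrable m (\<lambda>x. (cmod (h x))\<^sup>2)"
        by (rule Bochner_Integration.integrable_bound[OF if2]) (auto simp: h_def)
      have L2h: "Lp m 2 h" by (rule Lp2I[OF hm ih2])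
      have hf2: "(cmod (h x))\<^sup>2 = indicator S x * (cmod (f x))\<^sup>2" for x by (simp add: h_def indicator_def)
      have iSf: "integrable m (\<lambda>x. indicator S x * (cmod (f x))\<^sup>2)" using ih2 unfolding hf2 .
      have hp: "cmod (h x) powr p = indicator S x * ((cmod (f x))\<^sup>2) powr (p / 2)" for x
        using pq by (simp add: h_def indicator_def sq_powr)
      have r: "0 < p / 2" "p / 2 \<le> 1" using pq by auto
      note CH = conc_holder[OF r _ Sm S(2) _ iSf]
      have ihp: "integrable m (\<lambda>x. cmod (h x) powr p)" unfolding hp by (rule CH(1)) auto
      define Nh where "Nh = sqrt (\<integral>x. (cmod (h x))\<^sup>2 \<partial>m)"
      have hol: "Lp_norm m p h \<le> s * Nh"
      proof -
        have "(\<integral>x. cmod (h x) powr p \<partial>m) \<le> rpow (measure m S) (1 - p/2) * (\<integral>x. (cmod (h x))\<^sup>2 \<partial>m) powr (p/2)"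
          unfolding hp hf2 by (rule CH(2)) auto
        then have "Lp_norm m p h \<le> (rpow (measure m S) (1 - p/2) * (\<integral>x. (cmod (h x))\<^sup>2 \<partial>m) powr (p/2)) powr (1/p)"
          unfolding Lp_norm_def using pq by (intro powr_mono2) auto
        also have "\<dots> = rpow (measure m S) (1 - p/2) powr (1/p) * ((\<integral>x. (cmod (h x))\<^sup>2 \<partial>m) powr (p/2)) powr (1/p)"
          by (rule powr_mult)
        also have "rpow (measure m S) (1 - p/2) powr (1/p) = rpow (measure m S) ((1 - p/2) / p)"
          using pq by (intro rpow_powr) auto
        also have "(1 - p/2) / p = 1/p - 1/2" using pq by (simp add: field_simps)
        also have "((\<integral>x. (cmod (h x))\<^sup>2 \<partial>m) powr (p/2)) powr (1/p) = Nh"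
          unfolding Nh_def using pq by (simp add: powr_powr powr_half_sqrt integral_nonneg)
        finally show ?thesis unfolding s_def .
      qed
      have NhNf: "Nh \<le> Nf"
        unfolding Nh_def Nf_def by (intro real_sqrt_le_mono integral_mono ih2 if2) (auto simp: h_def)
      have LFn: "Lp mh 2 (fourier c m (F n))" for n using iso'(1) FF by auto
      have E1: "Nf \<le> sqrt (\<integral>\<xi>. (cmod (g \<xi>))\<^sup>2 \<partial>mh)"
      proof -
        have z1: "Lp mh 2 (\<lambda>_. 0)" "Lp m 2 (\<lambda>_. 0)" by (auto intro: Lp2I)
        have "sqrt (\<integral>x. (cmod (f x - 0))\<^sup>2 \<partial>m) \<le> sqrt (\<integral>\<xi>. (cmod (g \<xi> - 0))\<^sup>2 \<partial>mh)"
          by (rule L2_limit[of mh g "\<lambda>_. 0" "\<lambda>n. fourier c m (F n)" m f "\<lambda>_. 0" F])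
             (use Lg z1 LFn Lf FF Gl Fl iso'(2) in auto)
        then show ?thesis unfolding Nf_def by simp
      qed
      note iso_h = iso'[OF ih L2h]
      have Lhh: "Lp mh 2 (fourier c m h)" by (rule iso_h(1))
      have fhm[measurable]: "fourier c m h \<in> borel_measurable mh" using Lp2D(1)[OF Lhh] .
      have E2: "sqrt (\<integral>\<xi>. (cmod (g \<xi> - fourier c m h \<xi>))\<^sup>2 \<partial>mh) \<le> K"
      proof -
        have eq: "(\<integral>\<xi>. (cmod (fourier c m (F n) \<xi> - fourier c m h \<xi>))\<^sup>2 \<partial>mh) = (\<integral>x. (cmod (F n x - h x))\<^sup>2 \<partial>m)" for n
        proof -
          have iF: "integrable m (F n)" "Lp m 2 (F n)" using FF by auto
          have "(\<integral>\<xi>. (cmod (fourier c m (F n) \<xi> - fourier c m h \<xi>))\<^sup>2 \<partial>mh) = (\<integral>\<xi>. (cmod (fourier c m (\<lambda>x. F n x - h x) \<xi>))\<^sup>2 \<partial>mh)"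
            by (intro Bochner_Integration.integral_cong refl) (simp add: fourier_diff'[OF iF(1) ih])
          also have "\<dots> = (\<integral>x. (cmod (F n x - h x))\<^sup>2 \<partial>m)"
            using iso'(2)[of "\<lambda>x. F n x - h x"] iF ih Lp2_diff[OF iF(2) L2h] by auto
          finally show ?thesis .
        qed
        have "sqrt (\<integral>\<xi>. (cmod (g \<xi> - fourier c m h \<xi>))\<^sup>2 \<partial>mh) \<le> sqrt (\<integral>x. (cmod (f x - h x))\<^sup>2 \<partial>m)"
          by (rule L2_limit[of m f h F mh g "fourier c m h" "\<lambda>n. fourier c m (F n)"])
             (use Lf L2h FF Lg Lhh LFn Fl Gl eq in auto)
        also have "(\<integral>x. (cmod (f x - h x))\<^sup>2 \<partial>m) = (\<integral>x. indicator (UNIV - S) x * (cmod (f x))\<^sup>2 \<partial>m)"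
          by (intro Bochner_Integration.integral_cong refl) (simp add: h_def indicator_def)
        finally show ?thesis unfolding K_def .
      qed
      define Xh where "Xh = sqrt (\<integral>\<xi>. indicator \<Sigma> \<xi> * (cmod (fourier c m h \<xi>))\<^sup>2 \<partial>mh)"
      have E3: "Xh \<le> (\<sigma> * \<rho>) * Lp_norm m p h"
        unfolding Xh_def by (rule ext_est'[OF pq(1,2) SG \<Sigma> SGb sr0 ih L2h ihp])
      have ig1: "integrable mh (\<lambda>\<xi>. indicator (space mh - \<Sigma>) \<xi> * (cmod (g \<xi>))\<^sup>2)"
        by (rule Bochner_Integration.integrable_bound[OF ig2]) (use \<Sigma>(1) in \<open>auto split: split_indicator\<close>)
      have ig3: "integrable mh (\<lambda>\<xi>. indicator \<Sigma> \<xi> * (cmod (g \<xi>))\<^sup>2)"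
        by (rule Bochner_Integration.integrable_bound[OF ig2]) (use \<Sigma>(1) in \<open>auto split: split_indicator\<close>)
      have A1: "sqrt (\<integral>\<xi>. (cmod (g \<xi>))\<^sup>2 \<partial>mh) \<le> Gn + sqrt (\<integral>\<xi>. indicator \<Sigma> \<xi> * (cmod (g \<xi>))\<^sup>2 \<partial>mh)"
      proof -
        have "(\<integral>\<xi>. (cmod (g \<xi>))\<^sup>2 \<partial>mh) = (\<integral>\<xi>. indicator (space mh - \<Sigma>) \<xi> * (cmod (g \<xi>))\<^sup>2 + indicator \<Sigma> \<xi> * (cmod (g \<xi>))\<^sup>2 \<partial>mh)"
          using sets.sets_into_space[OF \<Sigma>(1)]
          by (intro Bochner_Integration.integral_cong refl) (auto simp: indicator_def)
        also have "\<dots> = (\<integral>\<xi>. indicator (space mh - \<Sigma>) \<xi> * (cmod (g \<xi>))\<^sup>2 \<partial>mh) + (\<integral>\<xi>. indicator \<Sigma> \<xi> * (cmod (g \<xi>))\<^sup>2 \<partial>mh)"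
          by (rule Bochner_Integration.integral_add[OF ig1 ig3])
        finally show ?thesis unfolding Gn_def
          by (simp add: sqrt_add_le_add_sqrt integral_nonneg)
      qed
      have A2: "sqrt (\<integral>\<xi>. indicator \<Sigma> \<xi> * (cmod (g \<xi>))\<^sup>2 \<partial>mh) \<le> Xh + sqrt (\<integral>\<xi>. (cmod (g \<xi> - fourier c m h \<xi>))\<^sup>2 \<partial>mh)"
      proof -
        define u where "u \<xi> = (if \<xi> \<in> \<Sigma> then fourier c m h \<xi> else 0)" for \<xi>
        define v where "v \<xi> = (if \<xi> \<in> \<Sigma> then g \<xi> - fourier c m h \<xi> else 0)" for \<xi>
        have [measurable]: "u \<in> borel_measurable mh" "v \<in> borel_measurable mh" unfolding u_def v_def using \<Sigma>(1) by measurable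
        have Ldiff: "Lp mh 2 (\<lambda>\<xi>. g \<xi> - fourier c m h \<xi>)" by (rule Lp2_diff[OF Lg Lhh])
        have id: "integrable mh (\<lambda>\<xi>. (cmod (g \<xi> - fourier c m h \<xi>))\<^sup>2)" using Lp2D(2)[OF Ldiff] .
        have ih2h: "integrable mh (\<lambda>\<xi>. (cmod (fourier c m h \<xi>))\<^sup>2)" using Lp2D(2)[OF Lhh] .
        have iu: "integrable mh (\<lambda>\<xi>. (cmod (u \<xi>))\<^sup>2)"
          by (rule Bochner_Integration.integrable_bound[OF ih2h]) (measurable, auto simp: u_def)
        have iv: "integrable mh (\<lambda>\<xi>. (cmod (v \<xi>))\<^sup>2)"
          by (rule Bochner_Integration.integrable_bound[OF id]) (measurable, auto simp: v_def)
        have "sqrt (\<integral>\<xi>. indicator \<Sigma> \<xi> * (cmod (g \<xi>))\<^sup>2 \<partial>mh) = sqrt (\<integral>\<xi>. (cmod (u \<xi> + v \<xi>))\<^sup>2 \<partial>mh)"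
          by (intro arg_cong[where f=sqrt] Bochner_Integration.integral_cong refl) (simp add: u_def v_def indicator_def)
        also have "\<dots> \<le> sqrt (\<integral>\<xi>. (cmod (u \<xi>))\<^sup>2 \<partial>mh) + sqrt (\<integral>\<xi>. (cmod (v \<xi>))\<^sup>2 \<partial>mh)"
          by (rule mink2(2)) (auto intro: iu iv)
        also have "(\<integral>\<xi>. (cmod (u \<xi>))\<^sup>2 \<partial>mh) = (\<integral>\<xi>. indicator \<Sigma> \<xi> * (cmod (fourier c m h \<xi>))\<^sup>2 \<partial>mh)"
          by (intro Bochner_Integration.integral_cong refl) (simp add: u_def indicator_def)
        also have "sqrt (\<integral>\<xi>. (cmod (v \<xi>))\<^sup>2 \<partial>mh) \<le> sqrt (\<integral>\<xi>. (cmod (g \<xi> - fourier c m h \<xi>))\<^sup>2 \<partial>mh)"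
          by (intro real_sqrt_le_mono integral_mono iv id) (auto simp: v_def)
        finally show ?thesis unfolding Xh_def by simp
      qed
      have "Xh \<le> (\<sigma> * \<rho>) * (s * Nh)" using E3 hol sr0 by (smt (verit) mult_left_mono)
      also have "\<dots> \<le> (\<sigma> * \<rho>) * (s * Nf)" using NhNf sr0 s0 by (intro mult_left_mono) auto
      also have "(\<sigma> * \<rho>) * (s * Nf) = \<kappa> * Nf" unfolding \<kappa>_def by (simp add: algebra_simps)
      finally have E3': "Xh \<le> \<kappa> * Nf" .
      have "Nf \<le> Gn + \<kappa> * Nf + K" using E1 A1 A2 E2 E3' by linarith
      then have "(1 - \<kappa>) * Nf \<le> K + Gn" by (simp add: algebra_simps)
      then show ?thesis using k1 by (simp add: field_simps)
    qed
    then show "sqrt (\<integral>x. (cmod (f x))\<^sup>2 \<partial>m) \<le>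
      (1 / (1 - \<rho> * rpow (measure m S) (1/p - 1/2) * rpow (measure mh \<Sigma>) (1/2 - inv_exp q))) *
      (sqrt (\<integral>x. indicator (UNIV - S) x * (cmod (f x))\<^sup>2 \<partial>m) +
       sqrt (\<integral>\<xi>. indicator (space mh - \<Sigma>) \<xi> * (cmod (g \<xi>))\<^sup>2 \<partial>mh))"
      unfolding Nf_def K_def Gn_def \<kappa>_def s_def \<sigma>_def .
  qed
qed
end
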